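(* Let $F\colon\mathbb{N}\to(0,\infty)$ satisfy $\sum_{k=1}^\infty 1/F(k)<\infty$ and let $T=\sum_{k=\Xi(0)}^\infty\tau(k)$ be the explosion time of the birth process with rate function $F$ and initial value $\Xi(0)\in\mathbb{N}$. Then $T$ has a density $g$ with the following properties: 1. $g$ is bounded, $g(0)=0$ and $g(t)>0$ for all $t>0$. 2. There is a unique maximum point $m>0$ such that $g$ is increasing on $(0,m)$ and decreasing on $(m,\infty)$. 3. For any $t_0>0$, $\big|\frac{d}{dt}\log g(t)\big|$ is bounded uniformly in $t\ge t_0$. 4. $g$ is not analytic at $0$; in particular $\frac{d^k}{dt^k}g(0)=0$ for all $k\ge1$.
   Context: $\mathbb{N}=\{1,2,\dots\}$. The $\tau(k)$, $k\ge\Xi(0)$, are independent, $\tau(k)$ exponentially distributed with rate $F(k)$; the birth process is $\Xi(t)=\min\{k:\sum_{l=\Xi(0)}^k\tau(l)>t\}$, and $T=\sum_{k\ge\Xi(0)}\tau(k)$ is its explosion time. *)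

theory Defs
  imports "HOL-Probability.Probability"
begin

end

theory Submission
  imports Defs
begin

lemma convolution_density_left:
  fixes f :: "real \<Rightarrow> ennreal"
  assumes [measurable]: "f \<in> borel_measurable borel"
  assumes fin: "finite_measure (density lborel f)" "finite_measure N"
  assumes sN[measurable_cong, simp]: "sets N = sets borel"
  shows "density lborel f \<star> N = density lborel (\<lambda>x. \<integral>\<^sup>+y. f (x - y) \<partial>N)"
    (is "?l = ?r")
proof (intro measure_eqI)
  interpret N: finite_measure N by fact
  interpret pair_sigma_finite lborel N ..
  fix A assume "A \<in> sets ?l"
  then have [measurable]: "A \<in> sets borel"
    by simp
  have "emeasure ?l A = (\<integral>\<^sup>+x. \<integral>\<^sup>+y. indicator A (x + y) \<partial>N \<partial>density lborel f)"
    using fin by (intro convolution_emeasure') auto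
  also have "\<dots> = (\<integral>\<^sup>+x. f x * (\<integral>\<^sup>+y. indicator A (x + y) \<partial>N) \<partial>lborel)"
    by (subst nn_integral_density) auto
  also have "\<dots> = (\<integral>\<^sup>+x. (\<integral>\<^sup>+y. f x * indicator A (x + y) \<partial>N) \<partial>lborel)"
    by (intro nn_integral_cong nn_integral_cmult[symmetric]) auto
  also have "\<dots> = (\<integral>\<^sup>+y. (\<integral>\<^sup>+x. f x * indicator A (x + y) \<partial>lborel) \<partial>N)"
    by (rule Fubini'[symmetric]) measurable
  also have "\<dots> = (\<integral>\<^sup>+y. (\<integral>\<^sup>+x. f (x - y) * indicator A x \<partial>lborel) \<partial>N)"
  proof -
    have aff: "(\<integral>\<^sup>+x. f x * indicator A (x + y) \<partial>lborel) = (\<integral>\<^sup>+x. f (x - y) * indicator A x \<partial>lborel)" for y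
      by (subst nn_integral_real_affine[where c=1 and t="-y"])
         (auto simp add: one_ennreal_def[symmetric])
    show ?thesis by (simp add: aff)
  qed
  also have "\<dots> = (\<integral>\<^sup>+x. (\<integral>\<^sup>+y. f (x - y) * indicator A x \<partial>N) \<partial>lborel)"
    by (rule Fubini') measurable
  also have "\<dots> = (\<integral>\<^sup>+x. (\<integral>\<^sup>+y. f (x - y) \<partial>N) * indicator A x \<partial>lborel)"
    by (intro nn_integral_cong nn_integral_multc) auto
  also have "\<dots> = emeasure ?r A"
    by (subst emeasure_density) (auto intro!: nn_integral_cong split: split_indicator)
  finally show "emeasure ?l A = emeasure ?r A" .
qed simp

lemma ratio_mono:
  fixes u v :: "real \<Rightarrow> real" and l B :: real
  assumes um[measurable]: "u \<in> borel_measurable borel" and u0: "\<And>x. 0 \<le> u x" and uB: "\<And>x. u x \<le> B"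
    and upos: "\<And>x. 0 < x \<Longrightarrow> 0 < u x"
    and H3: "\<And>w t1 t2. 0 \<le> w \<Longrightarrow> 0 < t1 \<Longrightarrow> t1 \<le> t2 \<Longrightarrow> u (t1 - w) / u t1 \<le> u (t2 - w) / u t2"
    and eint: "integrable lborel (exponential_density l)" and l: "0 < l"
    and v: "\<And>t. 0 < t \<Longrightarrow> v t = (\<integral>x. u (t - x) * exponential_density l x \<partial>lborel)"
    and t: "0 < t1" "t1 \<le> t2"
  shows "v t1 / u t1 \<le> v t2 / u t2"
proof -
  have vt: "v t / u t = (\<integral>x. (u (t - x) / u t) * exponential_density l x \<partial>lborel)" if "0 < t" for t
  proof -
    have "v t / u t = (\<integral>x. u (t - x) * exponential_density l x / u t \<partial>lborel)"
      using v[OF that] by simp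
    also have "\<dots> = (\<integral>x. (u (t - x) / u t) * exponential_density l x \<partial>lborel)"
      by (simp add: field_simps)
    finally show ?thesis .
  qed
  have int: "integrable lborel (\<lambda>x. (u (t - x) / u t) * exponential_density l x)" if "0 < t" for t
  proof (rule Bochner_Integration.integrable_bound[where f="\<lambda>x. (B / u t) * exponential_density l x"])
    show "integrable lborel (\<lambda>x. (B / u t) * exponential_density l x)"
      using eint by (rule integrable_mult_right)
    show "(\<lambda>x. (u (t - x) / u t) * exponential_density l x) \<in> borel_measurable lborel"
      by measurable
    have "norm ((u (t - x) / u t) * exponential_density l x) \<le> norm ((B / u t) * exponential_density l x)" for x
    proof -
      have e: "0 \<le> exponential_density l x" using l by (rule exponential_density_nonneg)
      have b1: "u (t - x) / u t \<le> B / u t"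
        using upos[OF that] uB[of "t - x"] by (simp add: divide_right_mono)
      have b2: "0 \<le> u (t - x) / u t" using u0[of "t-x"] upos[OF that] by simp
      have a: "0 \<le> (u (t - x) / u t) * exponential_density l x"
        "(u (t - x) / u t) * exponential_density l x \<le> (B / u t) * exponential_density l x"
        using mult_nonneg_nonneg[OF b2 e] mult_right_mono[OF b1 e] by auto
      then show ?thesis by (metis abs_of_nonneg abs_ge_self order_trans real_norm_def)
    qed
    then show "AE x in lborel. norm ((u (t - x) / u t) * exponential_density l x) \<le> norm ((B / u t) * exponential_density l x)"
      by simp
  qed
  have "(\<integral>x. (u (t1 - x) / u t1) * exponential_density l x \<partial>lborel) \<le> (\<integral>x. (u (t2 - x) / u t2) * exponential_density l x \<partial>lborel)"
  proof (rule integral_mono[OF int int])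
    fix x :: real
    show "(u (t1 - x) / u t1) * exponential_density l x \<le> (u (t2 - x) / u t2) * exponential_density l x"
    proof (cases "x < 0")
      case True then show ?thesis by (simp add: exponential_density_def)
    next
      case False
      then show ?thesis using H3[of x t1 t2] t
        by (intro mult_right_mono exponential_density_nonneg l) auto
    qed
  qed (use t in auto)
  moreover have "0 < t2" using t by simp
  ultimately show ?thesis using vt[of t1] vt[of t2] t(1) by (simp only:)
qed

lemma ratio_to_H3:
  fixes u v :: "real \<Rightarrow> real" and l :: real
  assumes vpos: "\<And>t. 0 < t \<Longrightarrow> 0 < v t" and vneg: "\<And>t. t \<le> 0 \<Longrightarrow> v t = 0"
    and upos: "\<And>t. 0 < t \<Longrightarrow> 0 < u t"
    and dv: "\<And>t. 0 < t \<Longrightarrow> (v has_real_derivative l * (u t - v t)) (at t)"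
    and mono: "\<And>t1 t2. 0 < t1 \<Longrightarrow> t1 \<le> t2 \<Longrightarrow> v t1 / u t1 \<le> v t2 / u t2"
    and l: "0 < l"
    and w: "0 \<le> w" and t: "0 < t1" "t1 \<le> t2"
  shows "v (t1 - w) / v t1 \<le> v (t2 - w) / v t2"
proof (cases "t1 - w \<le> 0")
  case True
  have "0 \<le> v (t2 - w)" using vpos[of "t2 - w"] vneg[of "t2 - w"] by (cases "t2 - w \<le> 0") auto
  then have "0 \<le> v (t2 - w) / v t2" using vpos[of t2] t by simp
  then show ?thesis using vneg[OF True] by simp
next
  case False
  define r where "r s = l * (u s / v s - 1)" for s
  have rmono: "r s2 \<le> r s1" if "0 < s1" "s1 \<le> s2" for s1 s2
  proof -
    have "v s1 / u s1 \<le> v s2 / u s2" by (rule mono[OF that])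
    moreover have "0 < v s1 / u s1" using vpos upos that by simp
    ultimately have "u s2 / v s2 \<le> u s1 / v s1"
      using vpos upos that
      by (metis divide_inverse_commute inverse_divide le_imp_inverse_le mult.commute)
    then show ?thesis unfolding r_def using l by (simp add: mult_left_mono)
  qed
  have dln: "((\<lambda>s. ln (v s)) has_real_derivative r s) (at s)" if "0 < s" for s
  proof -
    have "((\<lambda>s. ln (v s)) has_real_derivative inverse (v s) * (l * (u s - v s))) (at s)"
      by (rule DERIV_chain2[OF DERIV_ln[OF vpos[OF that]] dv[OF that]])
    moreover have "inverse (v s) * (l * (u s - v s)) = r s"
      unfolding r_def using vpos[OF that] by (simp add: field_simps)
    ultimately show ?thesis by simp
  qed
  define h where "h s = ln (v s) - ln (v (s - w))" for s
  have "h t2 \<le> h t1"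
  proof (rule DERIV_nonpos_imp_nonincreasing[OF t(2)])
    fix x assume x: "t1 \<le> x" "x \<le> t2"
    have x0: "0 < x - w" using False x by simp
    have d2: "((\<lambda>s. s - w) has_real_derivative 1) (at x)" by (auto intro!: derivative_eq_intros)
    have "(h has_real_derivative r x - r (x - w) * 1) (at x)"
    proof -
      have x1: "0 < x" using x0 w by simp
      from DERIV_diff[OF dln[OF x1] DERIV_chain2[OF dln[OF x0] d2]]
      show ?thesis by (simp add: h_def[abs_def])
    qed
    moreover have "r x - r (x - w) * 1 \<le> 0" using rmono[OF x0] w by simp
    ultimately show "\<exists>y. (h has_real_derivative y) (at x) \<and> y \<le> 0" by blast
  qed
  moreover have "v (s - w) / v s = exp (- h s)" if "w < s" for s
    using vpos[of s] vpos[of "s - w"] that w unfolding h_def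
    by (simp add: exp_diff)
  ultimately show ?thesis using False t by simp
qed


locale bp = prob_space M for M :: "'a measure" +
  fixes F :: "nat \<Rightarrow> real" and n0 :: nat and \<tau> :: "nat \<Rightarrow> 'a \<Rightarrow> real"
  assumes F_pos: "\<And>k. k \<ge> 1 \<Longrightarrow> F k > 0"
  and F_sum: "summable (\<lambda>k. 1 / F (Suc k))"
  and n0: "n0 \<ge> 1"
  and indep: "indep_vars (\<lambda>_. borel) \<tau> {n0..}"
  and expo: "\<And>k. k \<ge> n0 \<Longrightarrow> distributed M lborel (\<tau> k) (\<lambda>x. ennreal (exponential_density (F k) x))"
begin

definition lam where "lam k = F (k + n0)"
definition X where "X k = \<tau> (k + n0)"
definition Tt where "Tt j \<omega> = (\<Sum>k. X (k + j) \<omega>)"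
definition Tn where "Tn j N \<omega> = (\<Sum>k\<in>{j..<N}. X k \<omega>)"
definition G :: "real \<Rightarrow> ('a \<Rightarrow> real) \<Rightarrow> real \<Rightarrow> real" where
  "G l Y t = (\<integral>\<omega>. exponential_density l (t - Y \<omega>) \<partial>M)"
definition g where "g j = G (lam j) (Tt (Suc j))"
definition gN where "gN j N = G (lam j) (Tn (Suc j) N)"
definition good where "good \<omega> \<longleftrightarrow> (\<forall>k. 0 \<le> X k \<omega>) \<and> summable (\<lambda>k. X k \<omega>)"

lemma lam_pos: "lam k > 0"
  unfolding lam_def using F_pos n0 by simp

lemma lam_sum: "summable (\<lambda>k. 1 / lam k)"
proof -
  have "summable (\<lambda>k. 1 / F (Suc (k + (n0 - 1))))"
    using F_sum summable_iff_shift[of "\<lambda>k. 1 / F (Suc k)" "n0 - 1"] by simp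
  moreover have "Suc (k + (n0 - 1)) = k + n0" for k using n0 by simp
  ultimately show ?thesis unfolding lam_def by simp
qed

lemma X_distr: "distributed M lborel (X k) (\<lambda>x. ennreal (exponential_density (lam k) x))"
  unfolding X_def lam_def using expo[of "k + n0"] by simp

lemma X_meas[measurable]: "X k \<in> borel_measurable M"
  using distributed_measurable[OF X_distr[of k]] by simp

lemma X_nonneg_AE: "AE \<omega> in M. 0 \<le> X k \<omega>"
proof -
  have "(AE \<omega> in M. 0 \<le> X k \<omega>) \<longleftrightarrow> (AE x in lborel. 0 < ennreal (exponential_density (lam k) x) \<longrightarrow> 0 \<le> x)"
    by (rule distributed_AE2[OF X_distr]) simp
  moreover have "AE x in lborel. 0 < ennreal (exponential_density (lam k) x) \<longrightarrow> 0 \<le> x"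
    by (auto simp: exponential_density_def)
  ultimately show ?thesis by simp
qed

lemma X_le: "0 \<le> a \<Longrightarrow> \<P>(\<omega> in M. X k \<omega> \<le> a) = 1 - exp (- a * lam k)"
  using exponential_distributedD_le[OF X_distr _ lam_pos] by simp

lemma X_nn_integral: "(\<integral>\<^sup>+\<omega>. ennreal (X k \<omega>) \<partial>M) = ennreal (1 / lam k)"
proof -
  have "integrable M (\<lambda>x. X k x ^ 1)"
    by (rule erlang_ith_moment_integrable[OF lam_pos X_distr[of k]])
  moreover have "expectation (\<lambda>x. X k x) = 1 / lam k"
    using exponential_distributed_expectation[OF lam_pos X_distr[of k]] by simp
  ultimately show ?thesis
    using nn_integral_eq_integral[of M "X k"] X_nonneg_AE[of k] by simp
qed

lemma AE_good: "AE \<omega> in M. good \<omega>"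
proof -
  have nn: "AE \<omega> in M. \<forall>k. 0 \<le> X k \<omega>"
    using X_nonneg_AE by (simp add: AE_all_countable)
  have "(\<integral>\<^sup>+\<omega>. (\<Sum>k. ennreal (X k \<omega>)) \<partial>M) = (\<Sum>k. \<integral>\<^sup>+\<omega>. ennreal (X k \<omega>) \<partial>M)"
    by (rule nn_integral_suminf) simp
  also have "\<dots> = (\<Sum>k. ennreal (1 / lam k))" by (simp add: X_nn_integral)
  also have "\<dots> = ennreal (\<Sum>k. 1 / lam k)"
    using lam_sum lam_pos by (intro suminf_ennreal2) (auto simp: less_imp_le)
  finally have "(\<integral>\<^sup>+\<omega>. (\<Sum>k. ennreal (X k \<omega>)) \<partial>M) \<noteq> \<infinity>" by simp
  then have "AE \<omega> in M. (\<Sum>k. ennreal (X k \<omega>)) \<noteq> \<infinity>"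
    by (intro nn_integral_noteq_infinite) simp
  with nn show ?thesis
    unfolding good_def by eventually_elim (auto intro: summable_suminf_not_top)
qed


lemma tau_meas[measurable]: "i \<ge> n0 \<Longrightarrow> \<tau> i \<in> borel_measurable M"
  using distributed_measurable[OF expo[of i]] by simp

lemma indep_X_rest:
  assumes Ff: "Ff \<in> borel_measurable (PiM {j+n0<..} (\<lambda>_. borel))"
  shows "indep_var borel (X j) borel (\<lambda>\<omega>. Ff (\<lambda>i\<in>{j+n0<..}. \<tau> i \<omega>))"
proof -
  have "indep_var (PiM {j+n0} (\<lambda>_. borel)) (\<lambda>\<omega>. \<lambda>i\<in>{j+n0}. \<tau> i \<omega>)
      (PiM {j+n0<..} (\<lambda>_. borel)) (\<lambda>\<omega>. \<lambda>i\<in>{j+n0<..}. \<tau> i \<omega>)"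
    by (rule indep_var_restrict[OF indep]) auto
  then have "indep_var borel ((\<lambda>f. f (j+n0)) \<circ> (\<lambda>\<omega>. \<lambda>i\<in>{j+n0}. \<tau> i \<omega>))
      borel (Ff \<circ> (\<lambda>\<omega>. \<lambda>i\<in>{j+n0<..}. \<tau> i \<omega>))"
    by (rule indep_var_compose) (auto simp: Ff)
  moreover have "((\<lambda>f. f (j+n0)) \<circ> (\<lambda>\<omega>. \<lambda>i\<in>{j+n0}. \<tau> i \<omega>)) = X j"
    by (auto simp: X_def fun_eq_iff add.commute)
  ultimately show ?thesis by (simp add: comp_def)
qed

lemma Tt_meas[measurable]: "Tt j \<in> borel_measurable M"
  unfolding Tt_def by measurable

lemma Tn_meas[measurable]: "Tn j N \<in> borel_measurable M"
  unfolding Tn_def by measurable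

lemma indep_Tt: "indep_var borel (X j) borel (Tt (Suc j))"
proof -
  define Ff where "Ff = (\<lambda>h::nat\<Rightarrow>real. \<Sum>k. h (k + Suc j + n0))"
  have "Ff \<in> borel_measurable (PiM {j+n0<..} (\<lambda>_. borel))"
    unfolding Ff_def by (intro borel_measurable_suminf measurable_component_singleton) auto
  from indep_X_rest[OF this] show ?thesis
    by (simp add: Ff_def Tt_def[abs_def] X_def ac_simps)
qed

lemma indep_Tn: "indep_var borel (X j) borel (Tn (Suc j) N)"
proof -
  define Ff where "Ff = (\<lambda>h::nat\<Rightarrow>real. \<Sum>k\<in>{Suc j..<N}. h (k + n0))"
  have "Ff \<in> borel_measurable (PiM {j+n0<..} (\<lambda>_. borel))"
    unfolding Ff_def by (intro borel_measurable_sum measurable_component_singleton) auto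
  from indep_X_rest[OF this] show ?thesis
    by (simp add: Ff_def Tn_def[abs_def] X_def ac_simps)
qed


lemma exp_dens_bound: "0 \<le> exponential_density l x" "exponential_density l x \<le> l" if "0 < l"
  using that by (auto simp: exponential_density_def mult_le_cancel_left1)

lemma G_integrable:
  assumes [measurable]: "Y \<in> borel_measurable M" and l: "0 < l"
  shows "integrable M (\<lambda>\<omega>. exponential_density l (t - Y \<omega>))"
  by (rule integrable_const_bound[where B=l]) (use exp_dens_bound[OF l] in auto)

lemma G_nonneg: "0 < l \<Longrightarrow> 0 \<le> G l Y t"
  unfolding G_def using exp_dens_bound by (intro integral_nonneg_AE) auto

lemma G_le: assumes "Y \<in> borel_measurable M" "0 < l" shows "G l Y t \<le> l"
proof -
  have "G l Y t \<le> (\<integral>\<omega>. l \<partial>M)"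
    unfolding G_def using exp_dens_bound[OF assms(2)]
    by (intro integral_mono G_integrable assms) auto
  then show ?thesis by (simp add: prob_space)
qed

lemma G_density:
  assumes [measurable]: "Y \<in> borel_measurable M" and ind: "indep_var borel (X j) borel Y"
  shows "distributed M lborel (\<lambda>\<omega>. X j \<omega> + Y \<omega>) (\<lambda>t. ennreal (G (lam j) Y t))"
  unfolding distributed_def
proof safe
  have dX: "distr M lborel (X j) = density lborel (\<lambda>x. ennreal (exponential_density (lam j) x))"
    using distributed_distr_eq_density[OF X_distr] .
  have "distr M lborel (\<lambda>x. X j x + Y x) = (distr M lborel (X j) \<star> distr M lborel Y)"
    by (intro sum_indep_random_variable_lborel ind) auto
  also have "\<dots> = (density lborel (\<lambda>x. ennreal (exponential_density (lam j) x)) \<star> distr M lborel Y)"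
    by (simp add: dX)
  also have "\<dots> = density lborel (\<lambda>x. \<integral>\<^sup>+y. ennreal (exponential_density (lam j) (x - y)) \<partial>distr M lborel Y)"
  proof (rule convolution_density_left)
    show "finite_measure (density lborel (\<lambda>x. ennreal (exponential_density (lam j) x)))"
      using dX[symmetric] finite_measure_distr[of "X j" lborel] by simp
    show "finite_measure (distr M lborel Y)"
      by (intro finite_measure_distr) simp
  qed auto
  also have "\<dots> = density lborel (\<lambda>t. ennreal (G (lam j) Y t))"
  proof -
    { fix t :: real
    have "(\<integral>\<^sup>+y. ennreal (exponential_density (lam j) (t - y)) \<partial>distr M lborel Y)
        = (\<integral>\<^sup>+\<omega>. ennreal (exponential_density (lam j) (t - Y \<omega>)) \<partial>M)"
      by (subst nn_integral_distr) auto
    also have "\<dots> = ennreal (G (lam j) Y t)"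
      unfolding G_def using exp_dens_bound[OF lam_pos]
      by (intro nn_integral_eq_integral G_integrable lam_pos) auto
    finally have "(\<integral>\<^sup>+y. ennreal (exponential_density (lam j) (t - y)) \<partial>distr M lborel Y) = ennreal (G (lam j) Y t)" .
  } 
    then show ?thesis by (intro density_cong) (auto simp: G_def)
  qed
  finally show "distr M lborel (\<lambda>x. X j x + Y x) = density lborel (\<lambda>t. ennreal (G (lam j) Y t))" .
  show "(\<lambda>t. ennreal (G (lam j) Y t)) \<in> borel_measurable lborel"
    unfolding G_def by measurable
qed auto


lemma distributed_AE_cong:
  assumes "distributed M N Y1 f" "AE \<omega> in M. Y1 \<omega> = Y2 \<omega>" "Y2 \<in> measurable M N"
  shows "distributed M N Y2 f"
proof -
  have "distr M N Y2 = distr M N Y1"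
    using assms distributed_measurable[OF assms(1)] by (intro distr_cong_AE) auto
  then show ?thesis using assms unfolding distributed_def by simp
qed

lemma good_split: "good \<omega> \<Longrightarrow> Tt j \<omega> = X j \<omega> + Tt (Suc j) \<omega>"
proof -
  assume "good \<omega>"
  then have "summable (\<lambda>k. X (k + j) \<omega>)" unfolding good_def
    using summable_iff_shift[of "\<lambda>k. X k \<omega>" j] by simp
  from suminf_split_head[OF this] show ?thesis
    unfolding Tt_def by simp
qed

lemma Tt_nonneg: "good \<omega> \<Longrightarrow> 0 \<le> Tt j \<omega>"
proof -
  assume "good \<omega>"
  then have "summable (\<lambda>k. X (k + j) \<omega>)" "\<And>k. 0 \<le> X (k+j) \<omega>" unfolding good_def
    using summable_iff_shift[of "\<lambda>k. X k \<omega>" j] by auto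
  then show ?thesis unfolding Tt_def by (intro suminf_nonneg) auto
qed

lemma Tn_nonneg: "good \<omega> \<Longrightarrow> 0 \<le> Tn j N \<omega>"
  unfolding Tn_def good_def by (intro sum_nonneg) auto

lemma Tn_split: "j < N \<Longrightarrow> Tn j N \<omega> = X j \<omega> + Tn (Suc j) N \<omega>"
  unfolding Tn_def by (simp add: sum.atLeast_Suc_lessThan)

lemma Tt_distr: "distributed M lborel (Tt j) (\<lambda>t. ennreal (g j t))"
proof -
  have "distributed M lborel (\<lambda>\<omega>. X j \<omega> + Tt (Suc j) \<omega>) (\<lambda>t. ennreal (g j t))"
    unfolding g_def by (rule G_density[OF Tt_meas indep_Tt])
  then show ?thesis
  proof (rule distributed_AE_cong)
    show "AE \<omega> in M. X j \<omega> + Tt (Suc j) \<omega> = Tt j \<omega>"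
      using AE_good by eventually_elim (rule good_split[symmetric])
  qed simp
qed

lemma Tn_distr: "j < N \<Longrightarrow> distributed M lborel (Tn j N) (\<lambda>t. ennreal (gN j N t))"
proof -
  assume "j < N"
  have "distributed M lborel (\<lambda>\<omega>. X j \<omega> + Tn (Suc j) N \<omega>) (\<lambda>t. ennreal (gN j N t))"
    unfolding gN_def by (rule G_density[OF Tn_meas indep_Tn])
  moreover have "(\<lambda>\<omega>. X j \<omega> + Tn (Suc j) N \<omega>) = Tn j N"
    using Tn_split[OF \<open>j < N\<close>] by auto
  ultimately show ?thesis by simp
qed

lemma G_neg:
  assumes "AE \<omega> in M. 0 \<le> Y \<omega>" "t < 0"
  shows "G l Y t = 0"
proof -
  have "AE \<omega> in M. exponential_density l (t - Y \<omega>) = 0"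
    using assms(1) by eventually_elim (use assms(2) in \<open>simp add: exponential_density_def\<close>)
  then have "G l Y t = (\<integral>\<omega>. 0 \<partial>M)"
    unfolding G_def by (rule integral_eq_zero_AE[THEN trans]) simp
  then show ?thesis by simp
qed

lemma g_nonneg: "0 \<le> g j t" unfolding g_def by (intro G_nonneg lam_pos)
lemma gN_nonneg: "0 \<le> gN j N t" unfolding gN_def by (intro G_nonneg lam_pos)
lemma g_le: "g j t \<le> lam j" unfolding g_def by (intro G_le lam_pos) simp
lemma gN_le: "gN j N t \<le> lam j" unfolding gN_def by (intro G_le lam_pos) simp
lemma g_neg: "t < 0 \<Longrightarrow> g j t = 0"
  unfolding g_def by (intro G_neg) (use AE_good in \<open>eventually_elim, simp add: Tt_nonneg\<close>)
lemma gN_neg: "t < 0 \<Longrightarrow> gN j N t = 0"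
  unfolding gN_def by (intro G_neg) (use AE_good in \<open>eventually_elim, simp add: Tn_nonneg\<close>)
lemma g_meas[measurable]: "g j \<in> borel_measurable borel"
  unfolding g_def G_def by measurable
lemma gN_meas[measurable]: "gN j N \<in> borel_measurable borel"
  unfolding gN_def G_def by measurable


lemma setint_bounded:
  fixes f :: "real \<Rightarrow> real"
  assumes [measurable]: "f \<in> borel_measurable borel" and b: "\<And>y. y \<in> {a..b} \<Longrightarrow> \<bar>f y\<bar> \<le> C"
  shows "set_integrable lborel {a..b} f"
proof -
  have i: "integrable lborel (\<lambda>y. indicator {a..b} y * C)"
    by (intro integrable_mult_left integrable_real_indicator) (auto simp: emeasure_lborel_Icc_eq)
  have "integrable lborel (\<lambda>y. indicator {a..b} y * f y)"
    by (rule Bochner_Integration.integrable_bound[OF i]) (use b in \<open>auto simp: indicator_def intro: order_trans[OF _ abs_ge_self]\<close>)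
  then show ?thesis unfolding set_integrable_def by simp
qed

lemma G_formula:
  assumes Yd: "distributed M lborel Y (\<lambda>x. ennreal (u x))" and um[measurable]: "u \<in> borel_measurable borel"
    and u0: "\<And>x. 0 \<le> u x" and uB: "\<And>x. u x \<le> B" and uneg: "\<And>x. x < 0 \<Longrightarrow> u x = 0"
    and l: "0 < l" and a: "a \<le> 0" "a \<le> t"
  shows "G l Y t = l * exp (- t * l) * integral {a..t} (\<lambda>y. exp (l * y) * u y)"
proof -
  have "G l Y t = (\<integral>y. u y * exponential_density l (t - y) \<partial>lborel)"
    unfolding G_def by (rule distributed_integral[OF Yd, symmetric]) (auto simp: u0)
  also have "\<dots> = (\<integral>y. l * exp (- t * l) * (indicator {a..t} y * (exp (l * y) * u y)) \<partial>lborel)"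
  proof (intro Bochner_Integration.integral_cong refl)
    fix y
    show "u y * exponential_density l (t - y) = l * exp (- t * l) * (indicator {a..t} y * (exp (l * y) * u y))"
    proof (cases "y < a")
      case True then show ?thesis using uneg[of y] a by (simp add: indicator_def)
    next
      case False
      show ?thesis
      proof (cases "y \<le> t")
        case True
        have "exp (- (t - y) * l) = exp (- t * l) * exp (l * y)"
          by (simp add: exp_add[symmetric] algebra_simps)
        then show ?thesis using True False by (simp add: exponential_density_def indicator_def)
      next
        case False then show ?thesis by (simp add: exponential_density_def indicator_def)
      qed
    qed
  qed
  also have "\<dots> = l * exp (- t * l) * (\<integral>y. indicator {a..t} y * (exp (l * y) * u y) \<partial>lborel)"
    by (rule integral_mult_right_zero)
  also have "(\<integral>y. indicator {a..t} y * (exp (l * y) * u y) \<partial>lborel) = (LINT y:{a..t}|lborel. exp (l * y) * u y)"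
    by (simp add: set_lebesgue_integral_def)
  also have "\<dots> = integral {a..t} (\<lambda>y. exp (l * y) * u y)"
  proof (rule set_borel_integral_eq_integral)
    show "set_integrable lborel {a..t} (\<lambda>y. exp (l * y) * u y)"
    proof (rule setint_bounded[where C="exp (l * t) * B"])
      fix y assume y: "y \<in> {a..t}"
      have "exp (l * y) \<le> exp (l * t)" using y l by simp
      then show "\<bar>exp (l * y) * u y\<bar> \<le> exp (l * t) * B"
        using u0[of y] uB[of y] by (simp add: abs_mult) (intro mult_mono, auto)
    qed simp
  qed
  finally show ?thesis .
qed

lemma G_integrable_on:
  fixes u :: "real \<Rightarrow> real" and B a b :: real
  assumes um[measurable]: "u \<in> borel_measurable borel"
    and u0: "\<And>x. 0 \<le> u x" and uB: "\<And>x. u x \<le> B" and l: "0 < l"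
  shows "(\<lambda>y. exp (l * y) * u y) integrable_on {a..b}"
proof (rule set_borel_integral_eq_integral(1))
  show "set_integrable lborel {a..b} (\<lambda>y. exp (l * y) * u y)"
  proof (rule setint_bounded[where C="exp (l * b) * B"])
    fix y assume y: "y \<in> {a..b}"
    have "exp (l * y) \<le> exp (l * b)" using y l by simp
    then show "\<bar>exp (l * y) * u y\<bar> \<le> exp (l * b) * B"
      using u0[of y] uB[of y] by (simp add: abs_mult) (intro mult_mono, auto)
  qed simp
qed

lemma G_cont:
  assumes Yd: "distributed M lborel Y (\<lambda>x. ennreal (u x))" and um[measurable]: "u \<in> borel_measurable borel"
    and u0: "\<And>x. 0 \<le> u x" and uB: "\<And>x. u x \<le> B" and uneg: "\<And>x. x < 0 \<Longrightarrow> u x = 0"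
    and l: "0 < l"
  shows "isCont (G l Y) t"
proof -
  define a where "a = - \<bar>t\<bar> - 1"
  define b where "b = \<bar>t\<bar> + 1"
  define H where "H x = l * exp (- x * l) * integral {a..x} (\<lambda>y. exp (l * y) * u y)" for x
  have ab: "a < t" "t < b" "a \<le> 0" unfolding a_def b_def by auto
  have "continuous_on {a..b} (\<lambda>x. integral {a..x} (\<lambda>y. exp (l * y) * u y))"
    by (intro indefinite_integral_continuous_1 G_integrable_on[OF um u0 uB l])
  then have "isCont (\<lambda>x. integral {a..x} (\<lambda>y. exp (l * y) * u y)) t"
    using ab by (intro continuous_on_interior[where S="{a..b}"]) auto
  then have "isCont H t" unfolding H_def by (intro continuous_intros)
  moreover have Geq: "G l Y x = H x" if "x \<in> {a<..<b}" for x
    unfolding H_def using that ab by (intro G_formula[OF Yd um u0 uB uneg l]) auto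
  moreover have "eventually (\<lambda>x. G l Y x = H x) (nhds t)"
    using eventually_nhds_in_open[of "{a<..<b}" t] ab
    by (auto elim!: eventually_mono intro: Geq)
  ultimately show ?thesis
    using isCont_cong by blast
qed

lemma deriv_aux:
  fixes I :: "real \<Rightarrow> real"
  assumes dI: "(I has_real_derivative c) (at t)"
  shows "((\<lambda>x. l * exp (- x * l) * I x) has_real_derivative (l * (exp (- t * l) * (- l)) * I t + l * exp (- t * l) * c)) (at t)"
proof -
  have d1: "((\<lambda>x. exp (- x * l)) has_real_derivative exp (- t * l) * (- l)) (at t)"
  proof -
    have "((\<lambda>x. - x * l) has_real_derivative - l) (at t)"
      by (auto intro!: derivative_eq_intros)
    from DERIV_chain2[OF DERIV_exp this] show ?thesis by (simp add: mult.commute)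
  qed
  show ?thesis
    using DERIV_mult[OF DERIV_cmult[OF d1, of l] dI] by (simp add: algebra_simps)
qed

lemma G_deriv:
  assumes Yd: "distributed M lborel Y (\<lambda>x. ennreal (u x))" and um[measurable]: "u \<in> borel_measurable borel"
    and u0: "\<And>x. 0 \<le> u x" and uB: "\<And>x. u x \<le> B" and uneg: "\<And>x. x < 0 \<Longrightarrow> u x = 0"
    and l: "0 < l" and uc: "isCont u t"
  shows "(G l Y has_real_derivative l * (u t - G l Y t)) (at t)"
proof -
  define a where "a = - \<bar>t\<bar> - 1"
  define b where "b = \<bar>t\<bar> + 1"
  define f where "f y = exp (l * y) * u y" for y
  define I where "I x = integral {a..x} f" for x
  define H where "H x = l * exp (- x * l) * I x" for x
  have ab: "a < t" "t < b" "a \<le> 0" unfolding a_def b_def by auto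
  have Geq: "G l Y x = H x" if "x \<in> {a<..<b}" for x
    unfolding H_def I_def f_def using that ab by (intro G_formula[OF Yd um u0 uB uneg l]) auto
  have "(I has_vector_derivative f t) (at t within ({a..b} - {}))"
    unfolding I_def
  proof (rule integral_has_vector_derivative_continuous_at)
    show "f integrable_on {a..b}" unfolding f_def by (rule G_integrable_on[OF um u0 uB l])
    show "continuous (at t within {a..b} - {}) f"
    proof -
      have "isCont f t" unfolding f_def by (rule isCont_mult[OF _ uc]) simp
      then show ?thesis by (rule continuous_at_imp_continuous_within)
    qed
  qed (use ab in auto)
  then have dI: "(I has_real_derivative f t) (at t)"
    using ab by (simp add: has_real_derivative_iff_has_vector_derivative at_within_Icc_at)
  have "(H has_real_derivative (l * (exp (- t * l) * (- l)) * I t + l * exp (- t * l) * f t)) (at t)"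
    unfolding H_def by (rule deriv_aux[OF dI])
  moreover have "l * (exp (- t * l) * (- l)) * I t + l * exp (- t * l) * f t = l * (u t - H t)"
  proof -
    have "exp (- t * l) * exp (l * t) = 1" by (simp add: exp_add[symmetric])
    then show ?thesis unfolding H_def f_def by (simp add: algebra_simps)
  qed
  ultimately have "(H has_real_derivative l * (u t - H t)) (at t)" by simp
  moreover have "H t = G l Y t" using Geq ab by simp
  ultimately have "(H has_real_derivative l * (u t - G l Y t)) (at t)" by simp
  then show ?thesis
    by (rule has_field_derivative_transform_within_open[where S="{a<..<b}"]) (use ab Geq in auto)
qed


lemma g_cont: "isCont (g j) t"
  unfolding g_def
  by (rule G_cont[OF Tt_distr g_meas g_nonneg g_le g_neg lam_pos])

lemma g_deriv: "(g j has_real_derivative lam j * (g (Suc j) t - g j t)) (at t)"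
  unfolding g_def[of j]
  by (rule G_deriv[OF Tt_distr g_meas g_nonneg g_le g_neg lam_pos g_cont, folded g_def])

lemma zero_at0:
  fixes f :: "real \<Rightarrow> real"
  assumes "isCont f 0" "\<And>t. t < 0 \<Longrightarrow> f t = 0"
  shows "f 0 = 0"
proof -
  have "(f \<longlongrightarrow> f 0) (at_left 0)"
    using assms(1) by (simp add: isCont_def filterlim_at_split)
  moreover have "(f \<longlongrightarrow> 0) (at_left 0)"
    by (rule tendsto_eventually) (auto simp: eventually_at_left_field intro!: exI[of _ "-1"] assms(2))
  ultimately show ?thesis
    using tendsto_unique[OF trivial_limit_at_left_real] by blast
qed

lemma g_zero: "g j 0 = 0"
  by (rule zero_at0[OF g_cont g_neg])

fun Dk :: "nat \<Rightarrow> nat \<Rightarrow> real \<Rightarrow> real" where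
  "Dk 0 j = g j"
| "Dk (Suc k) j = (\<lambda>t. lam j * (Dk k (Suc j) t - Dk k j t))"

lemma Dk_deriv: "(Dk k j has_real_derivative Dk (Suc k) j t) (at t)"
proof (induction k arbitrary: j)
  case 0
  then show ?case using g_deriv by simp
next
  case (Suc k)
  have "((\<lambda>t. lam j * (Dk k (Suc j) t - Dk k j t)) has_real_derivative
      lam j * (Dk (Suc k) (Suc j) t - Dk (Suc k) j t)) (at t)"
    by (intro DERIV_cmult DERIV_diff Suc.IH)
  then show ?case by simp
qed

lemma Dk_zero: "Dk k j 0 = 0"
  by (induction k arbitrary: j) (auto simp: g_zero)

lemma sum_le_prob:
  assumes ind: "indep_var borel (X k) borel Y" and [measurable]: "Y \<in> borel_measurable M" and d: "0 \<le> d"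
  shows "(1 - exp (- d * lam k)) * \<P>(\<omega> in M. Y \<omega> \<le> s) \<le> \<P>(\<omega> in M. X k \<omega> + Y \<omega> \<le> d + s)"
proof -
  have "\<P>(\<omega> in M. X k \<omega> \<in> {..d} \<and> Y \<omega> \<in> {..s}) = \<P>(\<omega> in M. X k \<omega> \<in> {..d}) * \<P>(\<omega> in M. Y \<omega> \<in> {..s})"
    by (rule prob_indep_random_variable[OF ind]) auto
  moreover have "\<P>(\<omega> in M. X k \<omega> \<in> {..d}) = 1 - exp (- d * lam k)"
    using X_le[OF d, of k] by simp
  moreover have "\<P>(\<omega> in M. X k \<omega> \<in> {..d} \<and> Y \<omega> \<in> {..s}) \<le> \<P>(\<omega> in M. X k \<omega> + Y \<omega> \<le> d + s)"
    by (intro finite_measure_mono) auto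
  ultimately show ?thesis by simp
qed

lemma G_pos:
  assumes [measurable]: "Y \<in> borel_measurable M" and l: "0 < l" and p: "\<P>(\<omega> in M. Y \<omega> \<le> t) > 0"
  shows "G l Y t > 0"
proof (rule ccontr)
  assume "\<not> G l Y t > 0"
  then have "G l Y t = 0" using G_nonneg[OF l, of Y t] by simp
  then have "AE \<omega> in M. exponential_density l (t - Y \<omega>) = 0"
    unfolding G_def using exp_dens_bound[OF l]
    by (subst integral_nonneg_eq_0_iff_AE[symmetric]) (auto intro: G_integrable l)
  then have "AE \<omega> in M. \<not> Y \<omega> \<le> t"
    by eventually_elim (use l in \<open>auto simp: exponential_density_def\<close>)
  then have "\<P>(\<omega> in M. Y \<omega> \<le> t) = 0" by (rule prob_eq_0_AE)
  with p show False by simp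
qed

lemma Tt_tail: "good \<omega> \<Longrightarrow> (\<lambda>k. Tt k \<omega>) \<longlonglongrightarrow> 0"
proof -
  assume "good \<omega>"
  then have sm: "summable (\<lambda>k. X k \<omega>)" unfolding good_def by simp
  have "Tt k \<omega> = (\<Sum>i. X i \<omega>) - (\<Sum>i<k. X i \<omega>)" for k
    using suminf_split_initial_segment[OF sm, of k] unfolding Tt_def by simp
  moreover have "(\<lambda>k. (\<Sum>i. X i \<omega>) - (\<Sum>i<k. X i \<omega>)) \<longlonglongrightarrow> (\<Sum>i. X i \<omega>) - (\<Sum>i. X i \<omega>)"
    by (intro tendsto_diff tendsto_const summable_LIMSEQ sm)
  ultimately show ?thesis by simp
qed

lemma Tt_le_to1:
  assumes s: "0 < s"
  shows "(\<lambda>k. \<P>(\<omega> in M. Tt k \<omega> \<le> s)) \<longlonglongrightarrow> 1"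
proof -
  have lim: "AE \<omega> in M. (\<lambda>k. indicator {\<omega>\<in>space M. Tt k \<omega> \<le> s} \<omega>) \<longlonglongrightarrow> (1::real)"
    using AE_good AE_space
  proof eventually_elim
    case (elim \<omega>)
    have "eventually (\<lambda>k. Tt k \<omega> < s) sequentially"
      using Tt_tail[OF elim(1)] s by (rule order_tendstoD)
    then have "eventually (\<lambda>k. indicator {\<omega>\<in>space M. Tt k \<omega> \<le> s} \<omega> = (1::real)) sequentially"
      by eventually_elim (use elim(2) in auto)
    then show ?case by (rule tendsto_eventually)
  qed
  have bnd: "AE \<omega> in M. norm (indicator {\<omega>\<in>space M. Tt k \<omega> \<le> s} \<omega> :: real) \<le> (1::real)" for k
    by (auto simp: indicator_def)
  have "(\<lambda>k. \<integral>\<omega>. indicator {\<omega>\<in>space M. Tt k \<omega> \<le> s} \<omega> \<partial>M) \<longlonglongrightarrow> (\<integral>\<omega>. (1::real) \<partial>M)"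
    by (rule Bochner_Integration.integral_dominated_convergence[of "\<lambda>_. 1" M "\<lambda>k. indicator {\<omega>\<in>space M. Tt k \<omega> \<le> s}" "\<lambda>_. 1", OF _ _ _ lim bnd]) auto
  then show ?thesis by (simp add: prob_space)
qed


lemma Tt_step:
  assumes p: "\<P>(\<omega> in M. Tt (Suc k) \<omega> \<le> s) > 0" and ss: "s < s'"
  shows "\<P>(\<omega> in M. Tt k \<omega> \<le> s') > 0"
proof -
  have "(1 - exp (- (s' - s) * lam k)) * \<P>(\<omega> in M. Tt (Suc k) \<omega> \<le> s) \<le> \<P>(\<omega> in M. X k \<omega> + Tt (Suc k) \<omega> \<le> (s' - s) + s)"
    using ss by (intro sum_le_prob indep_Tt) auto
  also have "\<dots> = \<P>(\<omega> in M. Tt k \<omega> \<le> s')"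
    by (rule prob_eq_AE) (use AE_good in \<open>auto elim!: eventually_mono simp: good_split[of _ k]\<close>)
  finally have le: "(1 - exp (- (s' - s) * lam k)) * \<P>(\<omega> in M. Tt (Suc k) \<omega> \<le> s) \<le> \<P>(\<omega> in M. Tt k \<omega> \<le> s')" .
  have h: "- (s' - s) * lam k < 0" using ss lam_pos[of k] by (intro mult_neg_pos) auto
  have "exp (- (s' - s) * lam k) < 1" using h by simp
  then have "0 < (1 - exp (- (s' - s) * lam k)) * \<P>(\<omega> in M. Tt (Suc k) \<omega> \<le> s)"
    using p by simp
  with le show ?thesis by linarith
qed

lemma Tt_pos_prob:
  assumes s: "0 < s"
  shows "\<P>(\<omega> in M. Tt k \<omega> \<le> s) > 0"
proof (rule ccontr)
  assume "\<not> ?thesis"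
  then have z: "\<P>(\<omega> in M. Tt k \<omega> \<le> s) = 0" using measure_nonneg[of M] by (simp add: not_less order.antisym)
  have "\<forall>s'<s. \<P>(\<omega> in M. Tt (k + n) \<omega> \<le> s') = 0" for n
  proof (induction n)
    case 0
    show ?case
    proof safe
      fix s' assume "s' < s"
      have "\<P>(\<omega> in M. Tt k \<omega> \<le> s') \<le> \<P>(\<omega> in M. Tt k \<omega> \<le> s)"
        using \<open>s' < s\<close> by (intro finite_measure_mono) auto
      then show "\<P>(\<omega> in M. Tt (k + 0) \<omega> \<le> s') = 0" using z measure_nonneg[of M] by (simp add: order.antisym)
    qed
  next
    case (Suc n)
    show ?case
    proof safe
      fix s' assume "s' < s"
      show "\<P>(\<omega> in M. Tt (k + Suc n) \<omega> \<le> s') = 0"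
      proof (rule ccontr)
        assume "\<P>(\<omega> in M. Tt (k + Suc n) \<omega> \<le> s') \<noteq> 0"
        then have "\<P>(\<omega> in M. Tt (Suc (k + n)) \<omega> \<le> s') > 0"
          using measure_nonneg[of M] by (simp add: order.not_eq_order_implies_strict)
        then have "\<P>(\<omega> in M. Tt (k + n) \<omega> \<le> (s' + s) / 2) > 0"
          by (rule Tt_step) (use \<open>s' < s\<close> in simp)
        moreover have "(s' + s) / 2 < s" using \<open>s' < s\<close> by simp
        then have "\<P>(\<omega> in M. Tt (k + n) \<omega> \<le> (s' + s) / 2) = 0" using Suc.IH by blast
        ultimately show False by linarith
      qed
    qed
  qed
  then have "(\<lambda>n. \<P>(\<omega> in M. Tt (n + k) \<omega> \<le> s / 2)) = (\<lambda>_. 0)"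
  proof -
    assume a: "\<And>n. \<forall>s'<s. \<P>(\<omega> in M. Tt (k + n) \<omega> \<le> s') = 0"
    have "s / 2 < s" using s by simp
    then show ?thesis using a by (simp only: add.commute[of _ k])
  qed
  moreover have "(\<lambda>n. \<P>(\<omega> in M. Tt (n + k) \<omega> \<le> s / 2)) \<longlonglongrightarrow> 1"
    using LIMSEQ_ignore_initial_segment[OF Tt_le_to1[of "s/2"], of k] s by simp
  ultimately have "(\<lambda>_. 0::real) \<longlonglongrightarrow> 1" by simp
  then show False using LIMSEQ_unique[OF tendsto_const] by fastforce
qed

lemma g_pos: "0 < t \<Longrightarrow> 0 < g j t"
  unfolding g_def by (intro G_pos Tt_meas lam_pos Tt_pos_prob)

lemma Tn_pos_prob:
  assumes "k \<le> N"
  shows "\<forall>s>0. \<P>(\<omega> in M. Tn k N \<omega> \<le> s) > 0"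
  using assms
proof (induction k rule: inc_induct)
  case base
  show ?case by (auto simp: Tn_def prob_space)
next
  case (step n)
  show ?case
  proof safe
    fix s :: real assume s: "0 < s"
    have "(1 - exp (- (s/2) * lam n)) * \<P>(\<omega> in M. Tn (Suc n) N \<omega> \<le> s/2) \<le> \<P>(\<omega> in M. X n \<omega> + Tn (Suc n) N \<omega> \<le> s/2 + s/2)"
      using s by (intro sum_le_prob indep_Tn) auto
    also have "\<dots> = \<P>(\<omega> in M. Tn n N \<omega> \<le> s)"
      using Tn_split[OF step(2)] by simp
    finally have le: "(1 - exp (- (s/2) * lam n)) * \<P>(\<omega> in M. Tn (Suc n) N \<omega> \<le> s/2) \<le> \<P>(\<omega> in M. Tn n N \<omega> \<le> s)" .
    have h: "- (s/2) * lam n < 0" using s lam_pos[of n] by (intro mult_neg_pos) auto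
    have "exp (- (s/2) * lam n) < 1" using h by simp
    moreover have "\<P>(\<omega> in M. Tn (Suc n) N \<omega> \<le> s/2) > 0"
      using step(3) s by (meson half_gt_zero)
    ultimately have "0 < (1 - exp (- (s/2) * lam n)) * \<P>(\<omega> in M. Tn (Suc n) N \<omega> \<le> s/2)"
      by (intro mult_pos_pos) auto
    with le show "\<P>(\<omega> in M. Tn n N \<omega> \<le> s) > 0" by linarith
  qed
qed

lemma gN_pos: "j < N \<Longrightarrow> 0 < t \<Longrightarrow> 0 < gN j N t"
  unfolding gN_def by (intro G_pos Tn_meas lam_pos Tn_pos_prob[rule_format]) auto


lemma gN_last: "Suc j = N \<Longrightarrow> gN j N t = exponential_density (lam j) t"
  unfolding gN_def G_def Tn_def by (simp add: prob_space)

lemma gN_cont: "Suc j < N \<Longrightarrow> isCont (gN j N) t"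
  unfolding gN_def[of j]
  by (rule G_cont[OF Tn_distr gN_meas gN_nonneg gN_le gN_neg lam_pos, folded gN_def])

lemma exp_dens_cont: "0 < t \<Longrightarrow> isCont (exponential_density l) t"
proof -
  assume t: "0 < t"
  have "isCont (\<lambda>t. l * exp (- t * l)) t" by (intro continuous_intros)
  moreover have "eventually (\<lambda>x. x \<in> {0<..}) (nhds t)"
    by (rule eventually_nhds_in_open) (use t in auto)
  then have "eventually (\<lambda>x. l * exp (- x * l) = exponential_density l x) (nhds t)"
    by eventually_elim (simp add: exponential_density_def)
  ultimately show ?thesis using isCont_cong by force
qed

lemma gN_cont_pos: "j < N \<Longrightarrow> 0 < t \<Longrightarrow> isCont (gN j N) t"
proof -
  assume "j < N" "0 < t"
  show ?thesis
  proof (cases "Suc j < N")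
    case True then show ?thesis by (rule gN_cont)
  next
    case False
    then have "Suc j = N" using \<open>j < N\<close> by simp
    then have "gN j N = exponential_density (lam j)" using gN_last by auto
    then show ?thesis using exp_dens_cont[OF \<open>0 < t\<close>] by simp
  qed
qed

lemma gN_deriv: "Suc j < N \<Longrightarrow> 0 < t \<Longrightarrow> (gN j N has_real_derivative lam j * (gN (Suc j) N t - gN j N t)) (at t)"
  unfolding gN_def[of j]
  by (rule G_deriv[OF Tn_distr gN_meas gN_nonneg gN_le gN_neg lam_pos gN_cont_pos, folded gN_def])

lemma gN_zero: "Suc j < N \<Longrightarrow> gN j N 0 = 0"
  by (rule zero_at0[OF gN_cont gN_neg])

lemma e_int: "integrable lborel (exponential_density (lam j))"
proof -
  have "integrable lborel (\<lambda>x. exponential_density (lam j) x * 1) \<longleftrightarrow> integrable M (\<lambda>x. 1::real)"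
    by (rule distributed_integrable[OF X_distr]) (auto intro: exponential_density_nonneg lam_pos)
  then show ?thesis by simp
qed

lemma gN_conv: "Suc j < N \<Longrightarrow> gN j N t = (\<integral>x. gN (Suc j) N (t - x) * exponential_density (lam j) x \<partial>lborel)"
proof -
  assume j: "Suc j < N"
  have "gN j N t = (\<integral>y. gN (Suc j) N y * exponential_density (lam j) (t - y) \<partial>lborel)"
    unfolding gN_def[of j] G_def
    by (rule distributed_integral[OF Tn_distr[OF j], symmetric]) (auto simp: gN_nonneg)
  also have "\<dots> = \<bar>-1\<bar> *\<^sub>R (\<integral>x. gN (Suc j) N (t + (-1) * x) * exponential_density (lam j) (t - (t + (-1) * x)) \<partial>lborel)"
    by (rule lborel_integral_real_affine) simp
  also have "\<dots> = (\<integral>x. gN (Suc j) N (t - x) * exponential_density (lam j) x \<partial>lborel)"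
    by simp
  finally show ?thesis .
qed

lemma gN_H3:
  assumes "j < N"
  shows "\<forall>w t1 t2. 0 \<le> w \<longrightarrow> 0 < t1 \<longrightarrow> t1 \<le> t2 \<longrightarrow> gN j N (t1 - w) / gN j N t1 \<le> gN j N (t2 - w) / gN j N t2"
proof -
  have "j \<le> N - 1" using assms by simp
  then show ?thesis
  proof (induction j rule: inc_induct)
    case base
    have N: "Suc (N - 1) = N" using assms by simp
    define l where "l = lam (N - 1)"
    have l: "0 < l" unfolding l_def by (rule lam_pos)
    have eq: "gN (N-1) N x = exponential_density l x" for x
      using gN_last[OF N] unfolding l_def by simp
    have r: "gN (N-1) N (t - w) / gN (N-1) N t = (if t < w then 0 else exp (w * l))" if "0 < t" for t w
    proof -
      have "exp (- (t - w) * l) / exp (- t * l) = exp (w * l)"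
        by (simp add: exp_diff[symmetric] algebra_simps)
      then show ?thesis using that l unfolding eq by (simp add: exponential_density_def)
    qed
    show ?case
    proof safe
      fix w t1 t2 :: real assume w: "0 \<le> w" and t: "0 < t1" "t1 \<le> t2"
      have "0 < t2" using t by simp
      then show "gN (N-1) N (t1 - w) / gN (N-1) N t1 \<le> gN (N-1) N (t2 - w) / gN (N-1) N t2"
        unfolding r[OF t(1)] r[OF \<open>0 < t2\<close>] using t by auto
    qed
  next
    case (step j)
    have j: "Suc j < N" using step(2) by simp
    note IH = step(3)[rule_format]
    have mono: "gN j N t1 / gN (Suc j) N t1 \<le> gN j N t2 / gN (Suc j) N t2"
      if "0 < t1" "t1 \<le> t2" for t1 t2
      by (rule ratio_mono[OF gN_meas gN_nonneg gN_le gN_pos IH e_int lam_pos gN_conv that])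
         (use j in auto)
    show ?case
    proof safe
      fix w t1 t2 :: real assume w: "0 \<le> w" and t: "0 < t1" "t1 \<le> t2"
      show "gN j N (t1 - w) / gN j N t1 \<le> gN j N (t2 - w) / gN j N t2"
      proof (rule ratio_to_H3[OF _ _ _ _ mono lam_pos w t])
        show "0 < gN j N t" if "0 < t" for t using gN_pos[OF _ that] j by simp
        show "gN j N t = 0" if "t \<le> 0" for t
          using gN_neg[of t] gN_zero[OF j] that by (cases "t = 0") auto
        show "0 < gN (Suc j) N t" if "0 < t" for t using gN_pos[OF j that] .
        show "(gN j N has_real_derivative lam j * (gN (Suc j) N t - gN j N t)) (at t)" if "0 < t" for t
          by (rule gN_deriv[OF j that])
      qed
    qed
  qed
qed

lemma gN_ratio:
  assumes N: "Suc 0 < N" and t: "0 < t1" "t1 \<le> t2"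
  shows "gN 0 N t1 / gN (Suc 0) N t1 \<le> gN 0 N t2 / gN (Suc 0) N t2"
proof -
  have H: "gN (Suc 0) N (t1 - w) / gN (Suc 0) N t1 \<le> gN (Suc 0) N (t2 - w) / gN (Suc 0) N t2"
    if "0 \<le> w" "0 < t1" "t1 \<le> t2" for w t1 t2
    using gN_H3[OF N] that by blast
  have P: "0 < gN (Suc 0) N x" if "0 < x" for x using gN_pos[OF N that] .
  have C: "gN 0 N t = (\<integral>x. gN (Suc 0) N (t - x) * exponential_density (lam 0) x \<partial>lborel)" if "0 < t" for t
    using gN_conv[OF N] .
  show ?thesis
    by (rule ratio_mono[OF gN_meas gN_nonneg gN_le P H e_int lam_pos C t])
qed

lemma Tn_lim: "good \<omega> \<Longrightarrow> (\<lambda>N. Tn k N \<omega>) \<longlonglongrightarrow> Tt k \<omega>"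
proof -
  assume "good \<omega>"
  then have sm: "summable (\<lambda>i. X (i + k) \<omega>)" unfolding good_def
    using summable_iff_shift[of "\<lambda>i. X i \<omega>" k] by simp
  have "Tn k (n + k) \<omega> = (\<Sum>i<n. X (i + k) \<omega>)" for n
    unfolding Tn_def using sum.shift_bounds_nat_ivl[of "\<lambda>i. X i \<omega>" 0 k n]
    by (simp add: atLeast0LessThan)
  then have "(\<lambda>n. Tn k (n + k) \<omega>) \<longlonglongrightarrow> Tt k \<omega>"
    unfolding Tt_def using summable_LIMSEQ[OF sm] by simp
  then show ?thesis by (rule LIMSEQ_offset)
qed

lemma Tn_le: "good \<omega> \<Longrightarrow> Tn k N \<omega> \<le> Tt k \<omega>"
proof -
  assume g: "good \<omega>"
  then have sm: "summable (\<lambda>i. X (i + k) \<omega>)" unfolding good_def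
    using summable_iff_shift[of "\<lambda>i. X i \<omega>" k] by simp
  show ?thesis
  proof (cases "N \<le> k")
    case True then show ?thesis using Tt_nonneg[OF g] by (simp add: Tn_def)
  next
    case False
    then obtain n where n: "N = n + k" by (metis add.commute le_add_diff_inverse nat_le_linear)
    have "Tn k (n + k) \<omega> = (\<Sum>i<n. X (i + k) \<omega>)"
      unfolding Tn_def using sum.shift_bounds_nat_ivl[of "\<lambda>i. X i \<omega>" 0 k n]
      by (simp add: atLeast0LessThan)
    also have "\<dots> \<le> Tt k \<omega>"
      unfolding Tt_def by (rule sum_le_suminf[OF sm]) (use g in \<open>auto simp: good_def\<close>)
    finally show ?thesis using n by simp
  qed
qed

lemma gN_lim: "(\<lambda>N. gN j N t) \<longlonglongrightarrow> g j t"
proof -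
  define l where "l = lam j"
  have l: "0 < l" unfolding l_def by (rule lam_pos)
  have lim: "AE \<omega> in M. (\<lambda>N. exponential_density l (t - Tn (Suc j) N \<omega>)) \<longlonglongrightarrow> exponential_density l (t - Tt (Suc j) \<omega>)"
    using AE_good
  proof eventually_elim
    case (elim \<omega>)
    note L = Tn_lim[OF elim, of "Suc j"]
    show ?case
    proof (cases "t < Tt (Suc j) \<omega>")
      case True
      have "eventually (\<lambda>N. t < Tn (Suc j) N \<omega>) sequentially"
        using L True by (rule order_tendstoD)
      then have "eventually (\<lambda>N. exponential_density l (t - Tn (Suc j) N \<omega>) = exponential_density l (t - Tt (Suc j) \<omega>)) sequentially"
        by eventually_elim (use True in \<open>simp add: exponential_density_def\<close>)
      then show ?thesis by (rule tendsto_eventually)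
    next
      case False
      have "exponential_density l (t - Tn (Suc j) N \<omega>) = l * exp (- (t - Tn (Suc j) N \<omega>) * l)" for N
        using False Tn_le[OF elim, of "Suc j" N] by (simp add: exponential_density_def)
      moreover have "(\<lambda>N. l * exp (- (t - Tn (Suc j) N \<omega>) * l)) \<longlonglongrightarrow> l * exp (- (t - Tt (Suc j) \<omega>) * l)"
        by (intro tendsto_intros L)
      ultimately show ?thesis using False by (simp add: exponential_density_def)
    qed
  qed
  have bnd: "AE \<omega> in M. norm (exponential_density l (t - Tn (Suc j) N \<omega>)) \<le> l" for N
    using exp_dens_bound[OF l] by simp
  have "(\<lambda>N. \<integral>\<omega>. exponential_density l (t - Tn (Suc j) N \<omega>) \<partial>M) \<longlonglongrightarrow> (\<integral>\<omega>. exponential_density l (t - Tt (Suc j) \<omega>) \<partial>M)"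
    by (rule Bochner_Integration.integral_dominated_convergence[of "\<lambda>\<omega>. exponential_density l (t - Tt (Suc j) \<omega>)" M
          "\<lambda>N \<omega>. exponential_density l (t - Tn (Suc j) N \<omega>)" "\<lambda>_. l", OF _ _ _ lim bnd]) auto
  then show ?thesis unfolding gN_def g_def G_def l_def .
qed

lemma g_ratio: "0 < t1 \<Longrightarrow> t1 \<le> t2 \<Longrightarrow> g 0 t1 / g 1 t1 \<le> g 0 t2 / g 1 t2"
proof -
  assume t: "0 < t1" "t1 \<le> t2"
  have L1: "(\<lambda>N. gN 0 N t1 / gN 1 N t1) \<longlonglongrightarrow> g 0 t1 / g 1 t1"
    using g_pos[OF t(1), of 1] by (intro tendsto_divide gN_lim) auto
  have L2: "(\<lambda>N. gN 0 N t2 / gN 1 N t2) \<longlonglongrightarrow> g 0 t2 / g 1 t2"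
    using g_pos[of t2 1] t by (intro tendsto_divide gN_lim) auto
  have E: "eventually (\<lambda>N. gN 0 N t1 / gN 1 N t1 \<le> gN 0 N t2 / gN 1 N t2) sequentially"
    using eventually_ge_at_top[of 2] by eventually_elim (use t gN_ratio in \<open>auto simp: numeral_2_eq_2\<close>)
  show ?thesis by (rule tendsto_le[OF sequentially_bot L2 L1 E])
qed


lemma Tt_emeasure: "A \<in> sets borel \<Longrightarrow> emeasure M {\<omega>\<in>space M. Tt j \<omega> \<in> A} = (\<integral>\<^sup>+x. ennreal (g j x) * indicator A x \<partial>lborel)"
proof -
  assume A: "A \<in> sets borel"
  have "{\<omega>\<in>space M. Tt j \<omega> \<in> A} = Tt j -` A \<inter> space M" by auto
  then show ?thesis using distributed_emeasure[OF Tt_distr, of A j] A by simp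
qed

lemma flat_false:
  assumes ab: "0 < a" "a < b" and eq: "\<And>t. t \<in> {a..b} \<Longrightarrow> g (Suc 0) t = g 0 t"
  shows False
proof -
  have d0: "DERIV (g 0) t :> 0" if "t \<in> {a..b}" for t
    using g_deriv[of 0 t] eq[OF that] by simp
  have const: "g 0 t = g 0 a" if t: "t \<in> {a..b}" for t
  proof -
    have "g 0 a \<le> g 0 t"
      by (rule DERIV_nonneg_imp_nondecreasing) (use t d0 in \<open>auto intro!: exI[of _ 0]\<close>)
    moreover have "g 0 a \<ge> g 0 t"
      by (rule DERIV_nonpos_imp_nonincreasing) (use t d0 in \<open>auto intro!: exI[of _ 0]\<close>)
    ultimately show ?thesis by simp
  qed
  define c where "c = g 0 a"
  have c: "0 < c" unfolding c_def using g_pos ab by simp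
  have Q: "\<forall>t\<in>{a<..<b}. g j t = c" for j
  proof (induction j)
    case 0 show ?case unfolding c_def using const by (meson atLeastAtMost_iff greaterThanLessThan_iff less_imp_le)
  next
    case (Suc j)
    show ?case
    proof
      fix t assume t: "t \<in> {a<..<b}"
      have "(g j has_real_derivative 0) (at t)"
        by (rule has_field_derivative_transform_within_open[OF DERIV_const, of "{a<..<b}"])
           (use t Suc.IH in auto)
      from DERIV_unique[OF g_deriv[of j t] this] have "lam j * (g (Suc j) t - g j t) = 0" .
      then show "g (Suc j) t = c" using lam_pos[of j] Suc.IH t by simp
    qed
  qed
  have meas: "\<P>(\<omega> in M. Tt j \<omega> \<in> {a<..<b}) = c * (b - a)" for j
  proof -
    have "emeasure M {\<omega>\<in>space M. Tt j \<omega> \<in> {a<..<b}} = (\<integral>\<^sup>+x. ennreal (g j x) * indicator {a<..<b} x \<partial>lborel)"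
      by (rule Tt_emeasure) simp
    also have "\<dots> = (\<integral>\<^sup>+x. ennreal c * indicator {a<..<b} x \<partial>lborel)"
      using Q[of j] by (intro nn_integral_cong) (auto simp: indicator_def)
    also have "\<dots> = ennreal c * ennreal (b - a)"
      using ab by (subst nn_integral_cmult_indicator) auto
    also have "\<dots> = ennreal (c * (b - a))" using c ab by (simp add: ennreal_mult)
    finally show ?thesis using c ab by (simp add: emeasure_eq_measure)
  qed
  have le: "c * (b - a) \<le> 1 - \<P>(\<omega> in M. Tt j \<omega> \<le> a)" for j
  proof -
    have "\<P>(\<omega> in M. Tt j \<omega> \<in> {a<..<b}) \<le> \<P>(\<omega> in M. \<not> Tt j \<omega> \<le> a)"
      by (intro finite_measure_mono) auto
    also have "\<dots> = 1 - \<P>(\<omega> in M. Tt j \<omega> \<le> a)"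
      by (rule prob_neg) simp
    finally show ?thesis using meas[of j] by simp
  qed
  have "(\<lambda>j. 1 - \<P>(\<omega> in M. Tt j \<omega> \<le> a)) \<longlonglongrightarrow> 1 - 1"
    by (intro tendsto_diff tendsto_const Tt_le_to1 ab)
  then have "c * (b - a) \<le> 1 - 1"
    by (rule LIMSEQ_le_const) (use le in auto)
  moreover have "0 < c * (b - a)" using c ab by (intro mult_pos_pos) auto
  ultimately show False by simp
qed

lemma exists_up: "\<exists>t>0. g 0 t < g (Suc 0) t"
proof -
  obtain z where z: "0 < z" "z < 1" "g 0 1 - g 0 0 = (1 - 0) * (lam 0 * (g (Suc 0) z - g 0 z))"
    using MVT2[of 0 1 "g 0" "\<lambda>t. lam 0 * (g (Suc 0) t - g 0 t)"] g_deriv[of 0] by auto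
  have "0 < g 0 1" by (rule g_pos) simp
  then have "0 < lam 0 * (g (Suc 0) z - g 0 z)" using z g_zero[of 0] by simp
  then have "g 0 z < g (Suc 0) z" using lam_pos[of 0] by (simp add: zero_less_mult_iff)
  then show ?thesis using z by auto
qed

lemma exists_down: "\<exists>t>0. g (Suc 0) t < g 0 t"
proof (rule ccontr)
  assume "\<not> ?thesis"
  then have ge: "g 0 t \<le> g (Suc 0) t" if "0 < t" for t using that not_less by blast
  define c where "c = g 0 1"
  have c: "0 < c" unfolding c_def by (rule g_pos) simp
  define b where "b = 1 + 2 / c"
  have b: "1 < b" unfolding b_def using c by simp
  have inc: "c \<le> g 0 t" if "t \<in> {1..b}" for t
    unfolding c_def
  proof (rule DERIV_nonneg_imp_nondecreasing[of 1 t "g 0"])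
    show "1 \<le> t" using that by simp
    fix x assume x: "1 \<le> x" "x \<le> t"
    show "\<exists>y. DERIV (g 0) x :> y \<and> 0 \<le> y"
      using g_deriv[of 0 x] ge[of x] x lam_pos[of 0] by (intro exI[of _ "lam 0 * (g (Suc 0) x - g 0 x)"]) auto
  qed
  have "ennreal (c * (b - 1)) = ennreal c * emeasure lborel {1..b}"
    using b c by (simp add: ennreal_mult)
  also have "\<dots> = (\<integral>\<^sup>+x. ennreal c * indicator {1..b} x \<partial>lborel)"
    by (subst nn_integral_cmult_indicator) auto
  also have "\<dots> \<le> (\<integral>\<^sup>+x. ennreal (g 0 x) * indicator {1..b} x \<partial>lborel)"
    using inc by (intro nn_integral_mono) (auto simp: indicator_def intro: ennreal_leI)
  also have "\<dots> = emeasure M {\<omega>\<in>space M. Tt 0 \<omega> \<in> {1..b}}"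
    by (rule Tt_emeasure[symmetric]) simp
  also have "\<dots> \<le> 1" by (rule measure_le_1)
  finally have "c * (b - 1) \<le> 1" by simp
  moreover have "c * (b - 1) = 2" unfolding b_def using c by simp
  ultimately show False by simp
qed


definition rho where "rho t = g (Suc 0) t / g 0 t"

lemma rho_mono: "0 < t1 \<Longrightarrow> t1 \<le> t2 \<Longrightarrow> rho t2 \<le> rho t1"
proof -
  assume t: "0 < t1" "t1 \<le> t2"
  have "g 0 t1 / g (Suc 0) t1 \<le> g 0 t2 / g (Suc 0) t2" using g_ratio[OF t] by simp
  moreover have "0 < g 0 t1 / g (Suc 0) t1" using g_pos t by simp
  ultimately have "inverse (g 0 t2 / g (Suc 0) t2) \<le> inverse (g 0 t1 / g (Suc 0) t1)"
    by (rule le_imp_inverse_le)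
  then show ?thesis unfolding rho_def by simp
qed

lemma rho_cont: "0 < t \<Longrightarrow> isCont rho t"
  unfolding rho_def[abs_def] using g_pos[of t 0] by (intro isCont_divide g_cont) auto

lemma rho_gt: "0 < t \<Longrightarrow> 1 < rho t \<longleftrightarrow> g 0 t < g (Suc 0) t"
  unfolding rho_def using g_pos[of t 0] by (simp add: less_divide_eq)

lemma rho_lt: "0 < t \<Longrightarrow> rho t < 1 \<longleftrightarrow> g (Suc 0) t < g 0 t"
  unfolding rho_def using g_pos[of t 0] by (simp add: divide_less_eq)

lemma rho_eq_flat:
  assumes "0 < a" "a < b" "rho a = 1" "rho b = 1"
  shows False
proof (rule flat_false[OF assms(1,2)])
  fix t assume t: "t \<in> {a..b}"
  then have "rho t = 1" using rho_mono[of a t] rho_mono[of t b] assms by force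
  then show "g (Suc 0) t = g 0 t" unfolding rho_def using g_pos[of t 0] assms t by simp
qed

lemma mode: "\<exists>m>0. (\<forall>t. t \<noteq> m \<longrightarrow> g 0 t < g 0 m) \<and> strict_mono_on {0<..<m} (g 0) \<and>
                  monotone_on {m<..} (<) (>) (g 0)"
proof -
  obtain t1 where t1: "0 < t1" "1 < rho t1" using exists_up rho_gt by blast
  obtain t2 where t2: "0 < t2" "rho t2 < 1" using exists_down rho_lt by blast
  have "t1 < t2"
  proof (rule ccontr)
    assume "\<not> t1 < t2"
    then have "rho t1 \<le> rho t2" using rho_mono[OF t2(1)] by simp
    then show False using t1 t2 by simp
  qed
  have "continuous_on {t1..t2} rho"
    using rho_cont t1 by (intro continuous_at_imp_continuous_on) auto
  then obtain m where m: "t1 \<le> m" "m \<le> t2" "rho m = 1"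
    using IVT2'[of rho t2 1 t1] t1 t2 \<open>t1 < t2\<close> by auto
  have m0: "0 < m" using m t1 by simp
  have A: "1 < rho t" if "0 < t" "t < m" for t
  proof -
    have "1 \<le> rho t" using rho_mono[of t m] that m by simp
    moreover have "rho t \<noteq> 1" using rho_eq_flat[of t m] that m by auto
    ultimately show ?thesis by simp
  qed
  have B: "rho t < 1" if "m < t" for t
  proof -
    have "rho t \<le> 1" using rho_mono[of m t] that m m0 by simp
    moreover have "rho t \<noteq> 1" using rho_eq_flat[of m t] that m m0 by auto
    ultimately show ?thesis by simp
  qed
  have dpos: "\<exists>y. DERIV (g 0) x :> y \<and> 0 < y" if "0 < x" "x < m" for x
    using g_deriv[of 0 x] A[OF that] rho_gt[of x] that lam_pos[of 0]
    by (intro exI[of _ "lam 0 * (g (Suc 0) x - g 0 x)"]) auto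
  have dneg: "\<exists>y. DERIV (g 0) x :> y \<and> y < 0" if "m < x" for x
    using g_deriv[of 0 x] B[OF that] rho_lt[of x] that m0 lam_pos[of 0]
    by (intro exI[of _ "lam 0 * (g (Suc 0) x - g 0 x)"]) (auto simp: mult_pos_neg)
  have gc: "continuous_on {a..b} (g 0)" for a b
    using g_cont by (intro continuous_at_imp_continuous_on) auto
  have "\<forall>t. t \<noteq> m \<longrightarrow> g 0 t < g 0 m"
  proof safe
    fix t assume "t \<noteq> m"
    consider "t \<le> 0" | "0 < t" "t < m" | "m < t" using \<open>t \<noteq> m\<close> by linarith
    then show "g 0 t < g 0 m"
    proof cases
      case 1
      then have "g 0 t = 0" using g_neg[of t] g_zero[of 0] by (cases "t = 0") auto
      then show ?thesis using g_pos[OF m0] by simp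
    next
      case 2
      show ?thesis by (rule DERIV_pos_imp_increasing_open[OF 2(2) _ gc]) (use dpos 2 in auto)
    next
      case 3
      show ?thesis by (rule DERIV_neg_imp_decreasing_open[OF 3 _ gc]) (use dneg in auto)
    qed
  qed
  moreover have "strict_mono_on {0<..<m} (g 0)"
    unfolding strict_mono_on_def
  proof safe
    fix r s :: real assume rs: "r \<in> {0<..<m}" "s \<in> {0<..<m}" "r < s"
    show "g 0 r < g 0 s"
      by (rule DERIV_pos_imp_increasing[OF rs(3)]) (use dpos rs in auto)
  qed
  moreover have "monotone_on {m<..} (<) (>) (g 0)"
  proof (rule monotone_onI)
    fix r s :: real assume rs: "r \<in> {m<..}" "s \<in> {m<..}" "r < s"
    show "g 0 r > g 0 s"
      by (rule DERIV_neg_imp_decreasing[OF rs(3)]) (use dneg rs in auto)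
  qed
  ultimately show ?thesis using m0 by blast
qed

lemma logderiv: "\<forall>t0>0. \<exists>B. \<forall>t\<ge>t0. \<exists>d. ((\<lambda>x. ln (g 0 x)) has_real_derivative d) (at t) \<and> \<bar>d\<bar> \<le> B"
proof safe
  fix t0 :: real assume t0: "0 < t0"
  show "\<exists>B. \<forall>t\<ge>t0. \<exists>d. ((\<lambda>x. ln (g 0 x)) has_real_derivative d) (at t) \<and> \<bar>d\<bar> \<le> B"
  proof (rule exI[of _ "lam 0 * (rho t0 + 1)"], intro allI impI)
    fix t assume t: "t0 \<le> t"
    then have tp: "0 < t" using t0 by simp
    have d: "((\<lambda>x. ln (g 0 x)) has_real_derivative inverse (g 0 t) * (lam 0 * (g (Suc 0) t - g 0 t))) (at t)"
      by (rule DERIV_chain2[OF DERIV_ln[OF g_pos[OF tp]] g_deriv])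
    have eq: "inverse (g 0 t) * (lam 0 * (g (Suc 0) t - g 0 t)) = lam 0 * (rho t - 1)"
      unfolding rho_def using g_pos[OF tp, of 0] by (simp add: field_simps)
    have r1: "rho t \<le> rho t0" by (rule rho_mono[OF t0 t])
    have r0: "0 \<le> rho t" unfolding rho_def using g_nonneg g_pos[OF tp, of 0] by simp
    have "\<bar>lam 0 * (rho t - 1)\<bar> \<le> lam 0 * (rho t0 + 1)"
      using r1 r0 lam_pos[of 0] by (simp add: abs_mult abs_le_iff mult_left_mono)
    then show "\<exists>d. ((\<lambda>x. ln (g 0 x)) has_real_derivative d) (at t) \<and> \<bar>d\<bar> \<le> lam 0 * (rho t0 + 1)"
      using d eq by auto
  qed
qed


lemma zero_at0':
  fixes f :: "real \<Rightarrow> real"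
  assumes "isCont f 0" "0 < e" "\<And>t. -e < t \<Longrightarrow> t < 0 \<Longrightarrow> f t = 0"
  shows "f 0 = 0"
proof -
  have "(f \<longlongrightarrow> f 0) (at_left 0)"
    using assms(1) by (simp add: isCont_def filterlim_at_split)
  moreover have "(f \<longlongrightarrow> 0) (at_left 0)"
    by (rule tendsto_eventually) (use assms(2) in \<open>auto simp: eventually_at_left_field intro!: exI[of _ "-e"] assms(3)\<close>)
  ultimately show ?thesis
    using tendsto_unique[OF trivial_limit_at_left_real] by blast
qed

lemma not_analytic: "\<not> (\<exists>r>0. \<exists>c :: nat \<Rightarrow> real. \<forall>t\<in>ball 0 r. (\<lambda>n. c n * t ^ n) sums g 0 t)"
proof
  assume "\<exists>r>0. \<exists>c :: nat \<Rightarrow> real. \<forall>t\<in>ball 0 r. (\<lambda>n. c n * t ^ n) sums g 0 t"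
  then obtain r and c :: "nat \<Rightarrow> real" where r: "0 < r" and S: "\<And>t. t \<in> ball 0 r \<Longrightarrow> (\<lambda>n. c n * t ^ n) sums g 0 t"
    by blast
  have allz: "c n = 0" for n
  proof (rule ccontr)
    assume "c n \<noteq> 0"
    define k where "k = (LEAST n. c n \<noteq> 0)"
    have ck: "c k \<noteq> 0" unfolding k_def by (rule LeastI) fact
    have below: "c i = 0" if "i < k" for i
      using not_less_Least[of i "\<lambda>n. c n \<noteq> 0"] that unfolding k_def by auto
    have S2: "(\<lambda>i. c (i + k) * t ^ i) sums (g 0 t / t ^ k)" if t: "t \<in> ball 0 r" "t \<noteq> 0" for t
    proof -
      have "(\<lambda>i. c (i + k) * t ^ (i + k)) sums (g 0 t - (\<Sum>i<k. c i * t ^ i))"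
        by (rule sums_split_initial_segment[OF S[OF t(1)]])
      then have "(\<lambda>i. c (i + k) * t ^ (i + k)) sums g 0 t" using below by simp
      then have "(\<lambda>i. c (i + k) * t ^ (i + k) / t ^ k) sums (g 0 t / t ^ k)" by (rule sums_divide)
      moreover have "c (i + k) * t ^ (i + k) / t ^ k = c (i + k) * t ^ i" for i
        using t(2) by (simp add: power_add)
      ultimately show ?thesis by simp
    qed
    define K where "K = r / 2"
    have K: "K \<in> ball 0 r" "K \<noteq> 0" "0 < K" unfolding K_def using r by auto
    have sK: "summable (\<lambda>i. c (i + k) * K ^ i)" using S2[OF K(1,2)] by (rule sums_summable)
    define h where "h x = (\<Sum>i. c (i + k) * x ^ i)" for x
    have hc: "isCont h 0" unfolding h_def[abs_def] by (rule isCont_powser[OF sK]) (use K in simp)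
    have "h 0 = 0"
    proof (rule zero_at0'[OF hc r])
      fix t :: real assume t: "-r < t" "t < 0"
      then have tb: "t \<in> ball 0 r" by (auto simp: dist_real_def)
      have "g 0 t = 0" using g_neg t by simp
      then show "h t = 0" unfolding h_def using sums_unique[OF S2[OF tb]] t by simp
    qed
    moreover have "h 0 = c k" unfolding h_def using powser_zero[of "\<lambda>i. c (i + k)"] by simp
    ultimately show False using ck by simp
  qed
  have "r / 2 \<in> ball 0 r" using r by auto
  from S[OF this] have "(\<lambda>n. 0) sums g 0 (r / 2)" using allz by simp
  then have "g 0 (r / 2) = 0" using sums_unique sums_zero by metis
  moreover have "0 < g 0 (r / 2)" using r by (intro g_pos) simp
  ultimately show False by simp
qed

lemma Dk_props: "\<exists>r>0. \<exists>D :: nat \<Rightarrow> real \<Rightarrow> real. D 0 = g 0 \<and>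
                (\<forall>k. \<forall>t\<in>ball 0 r. (D k has_real_derivative D (Suc k) t) (at t)) \<and>
                (\<forall>k\<ge>1. D k 0 = 0)"
proof (rule exI[of _ 1], simp, rule exI[of _ "\<lambda>k. Dk k 0"], intro conjI allI impI ballI)
  show "(\<lambda>k. Dk k 0) 0 = g 0" by simp
  fix k :: nat
  show "(\<lambda>k. Dk k 0) k 0 = 0" by (simp add: Dk_zero)
  fix t :: real
  show "((\<lambda>k. Dk k 0) k has_real_derivative (\<lambda>k. Dk k 0) (Suc k) t) (at t)"
    using Dk_deriv[of k 0 t] by simp
qed

lemma T_eq: "Tt 0 = (\<lambda>\<omega>. \<Sum>k. \<tau> (k + n0) \<omega>)"
  unfolding Tt_def[abs_def] X_def by simp

end
theorem lemma1:
  fixes M :: "'a measure" and F :: "nat \<Rightarrow> real" and n0 :: nat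
    and \<tau> :: "nat \<Rightarrow> 'a \<Rightarrow> real" and T :: "'a \<Rightarrow> real"
  assumes "prob_space M"
    and F_pos: "\<And>k. k \<ge> 1 \<Longrightarrow> F k > 0"
    and F_sum: "summable (\<lambda>k. 1 / F (Suc k))"
    and n0: "n0 \<ge> 1"
    and indep: "prob_space.indep_vars M (\<lambda>_. borel) \<tau> {n0..}"
    and expo: "\<And>k. k \<ge> n0 \<Longrightarrow>
                 distributed M lborel (\<tau> k) (\<lambda>x. ennreal (exponential_density (F k) x))"
    and T_def: "\<And>\<omega>. T \<omega> = (\<Sum>k. \<tau> (k + n0) \<omega>)"
  shows "\<exists>g :: real \<Rightarrow> real.
           (\<forall>t. g t \<ge> 0) \<and> (\<forall>t<0. g t = 0) \<and>
           distributed M lborel T (\<lambda>t. ennreal (g t)) \<and>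
           \<comment> \<open>1.\<close>
           (\<exists>B. \<forall>t. \<bar>g t\<bar> \<le> B) \<and> g 0 = 0 \<and> (\<forall>t>0. g t > 0) \<and>
           \<comment> \<open>2.\<close>
           (\<exists>m>0. (\<forall>t. t \<noteq> m \<longrightarrow> g t < g m) \<and>
                  strict_mono_on {0<..<m} g \<and>
                  monotone_on {m<..} (<) (>) g) \<and>
           \<comment> \<open>3.\<close>
           (\<forall>t0>0. \<exists>B. \<forall>t\<ge>t0. \<exists>d.
                ((\<lambda>x. ln (g x)) has_real_derivative d) (at t) \<and> \<bar>d\<bar> \<le> B) \<and>
           \<comment> \<open>4.\<close>
           \<not> (\<exists>r>0. \<exists>c :: nat \<Rightarrow> real. \<forall>t\<in>ball 0 r. (\<lambda>n. c n * t ^ n) sums g t) \<and>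
           (\<exists>r>0. \<exists>D :: nat \<Rightarrow> real \<Rightarrow> real. D 0 = g \<and>
                (\<forall>k. \<forall>t\<in>ball 0 r. (D k has_real_derivative D (Suc k) t) (at t)) \<and>
                (\<forall>k\<ge>1. D k 0 = 0))"
proof -
  interpret B: bp M F n0 \<tau>
    by (intro bp.intro bp_axioms.intro assms(1) F_pos F_sum n0 indep expo)
  have T: "T = B.Tt 0" using T_def B.T_eq by (simp add: fun_eq_iff)
  have bnd: "\<exists>B. \<forall>t. \<bar>B.g 0 t\<bar> \<le> B"
    using B.g_le B.g_nonneg by (intro exI[of _ "B.lam 0"]) (auto simp: abs_le_iff)
  show ?thesis
  proof (rule exI[of _ "B.g 0"], intro conjI)
    show "\<forall>t. 0 \<le> B.g 0 t" using B.g_nonneg by auto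
    show "\<forall>t<0. B.g 0 t = 0" using B.g_neg by auto
    show "distributed M lborel T (\<lambda>t. ennreal (B.g 0 t))" using B.Tt_distr[of 0] T by simp
    show "\<exists>B. \<forall>t. \<bar>B.g 0 t\<bar> \<le> B" by (rule bnd)
    show "B.g 0 0 = 0" by (rule B.g_zero)
    show "\<forall>t>0. 0 < B.g 0 t" using B.g_pos by auto
    show "\<exists>m>0. (\<forall>t. t \<noteq> m \<longrightarrow> B.g 0 t < B.g 0 m) \<and> strict_mono_on {0<..<m} (B.g 0) \<and>
                  monotone_on {m<..} (<) (>) (B.g 0)" by (rule B.mode)
    show "\<forall>t0>0. \<exists>B. \<forall>t\<ge>t0. \<exists>d. ((\<lambda>x. ln (B.g 0 x)) has_real_derivative d) (at t) \<and> \<bar>d\<bar> \<le> B"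
      by (rule B.logderiv)
    show "\<not> (\<exists>r>0. \<exists>c :: nat \<Rightarrow> real. \<forall>t\<in>ball 0 r. (\<lambda>n. c n * t ^ n) sums B.g 0 t)"
      by (rule B.not_analytic)
    show "\<exists>r>0. \<exists>D :: nat \<Rightarrow> real \<Rightarrow> real. D 0 = B.g 0 \<and>
                (\<forall>k. \<forall>t\<in>ball 0 r. (D k has_real_derivative D (Suc k) t) (at t)) \<and>
                (\<forall>k\<ge>1. D k 0 = 0)" by (rule B.Dk_props)
  qed
qed

end
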